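(* Let $n, d, d_k$ be positive integers. For a real $n\times n$ matrix $M$, let $\mathrm{softmax}(M)$ denote the row-wise softmax, $(\mathrm{softmax}(M))_{ij} = \exp(M_{ij}) / \sum_{k=1}^n \exp(M_{ik})$, and for a matrix $A$ with strictly positive entries let $\log(A)$ denote the entrywise natural logarithm. A row-stochastic matrix is a real square matrix with nonnegative entries whose rows each sum to $1$. (1) Let $N$ be a positive integer and let $X_1, \dots, X_N \in \mathbb{R}^{n\times d}$ be pairwise distinct matrices. Let $A_1, \dots, A_N \in \mathbb{R}^{n\times n}$ be row-stochastic matrices with strictly positive entries such that $\mathrm{rank}(\log(A_m)) \le d_k$ for every $m = 1, \dots, N$. Then there exist maps $Q, K : \mathbb{R}^{n\times d} \to \mathbb{R}^{n\times d_k}$ such that $$\mathrm{softmax}\!\left(\frac{Q(X_m)K(X_m)^\top}{\sqrt{d_k}}\right) = A_m \quad \text{for all } m = 1, \dots, N.$$ (2) Suppose $d < n-1$ and let $X \in \mathbb{R}^{n\times d}$. Then there exists a row-stochastic matrix $A \in \mathbb{R}^{n\times n}$ with strictly positive entries and $\mathrm{rank}(\log(A)) = 1$ such that there are no matrices $W_q, W_k \in \mathbb{R}^{d\times d_k}$ satisfying $$\mathrm{softmax}\!\left(\frac{(XW_q)(XW_k)^\top}{\sqrt{d_k}}\right) = A.$$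
   Context: This formalizes the "low-rank/linear bottleneck" of standard dot-product attention: with linear query/key maps $Q(X) = XW_q$, $K(X) = XW_k$, the attention matrix is $\mathrm{softmax}(QK^\top/\sqrt{d_k})$ computed row-wise. *)

theory Defs
  imports "HOL-Analysis.Analysis"
begin

definition softmax :: "real^'n^'n \<Rightarrow> real^'n^'n" where
  "softmax M = (\<chi> i j. exp (M $ i $ j) / (\<Sum>k\<in>UNIV. exp (M $ i $ k)))"

definition mat_log :: "real^'n^'m \<Rightarrow> real^'n^'m" where
  "mat_log A = (\<chi> i j. ln (A $ i $ j))"

definition row_stochastic :: "real^'n^'n \<Rightarrow> bool" where
  "row_stochastic A \<longleftrightarrow> (\<forall>i j. 0 \<le> A $ i $ j) \<and> (\<forall>i. (\<Sum>j\<in>UNIV. A $ i $ j) = 1)"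

definition entrywise_pos :: "real^'n^'m \<Rightarrow> bool" where
  "entrywise_pos A \<longleftrightarrow> (\<forall>i j. 0 < A $ i $ j)"

end

theory Submission
  imports Defs
begin

lemma softmax_log:
  fixes A :: "real^'n^'n"
  assumes "row_stochastic A" "entrywise_pos A"
  shows "softmax (mat_log A) = A"
  using assms unfolding softmax_def mat_log_def row_stochastic_def entrywise_pos_def
  by (simp add: vec_eq_iff)

lemma rank_factor:
  fixes M :: "real^'n^'m"
  assumes "rank M \<le> CARD('k)"
  shows "\<exists>(U::real^'k^'m) (V::real^'k^'n). M = U ** transpose V"
proof -
  let ?R = "range (\<lambda>x. M *v x)"
  have sR: "subspace ?R" by (intro linear_subspace_image matrix_vector_mul_linear subspace_UNIV)
  have dR: "dim ?R \<le> dim (UNIV :: (real^'k) set)"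
    using assms by (simp add: rank_dim_range dim_UNIV)
  obtain T :: "(real^'k) set" where T: "subspace T" "dim T = dim ?R"
    by (rule choose_subspace_of_subspace[OF dR]) blast
  obtain f where f: "linear f" "f ` T = ?R"
    using subspace_isomorphism[OF T(1) sR T(2)] by blast
  have "\<forall>j. \<exists>y. M *v axis j 1 = f y"
    using f(2) by blast
  then obtain y where y: "\<And>j. M *v axis j 1 = f (y j)" by metis
  define V :: "real^'k^'n" where "V = (\<chi> j. y j)"
  have "M = matrix f ** transpose V"
  proof -
    have "M $ i $ j = (matrix f ** transpose V) $ i $ j" for i j
    proof -
      have "M $ i $ j = (M *v axis j 1) $ i"
        by (simp add: matrix_vector_mult_def axis_def if_distrib cong: if_cong)
      also have "\<dots> = (matrix f *v y j) $ i"
        using y f(1) by (simp add: matrix_works)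
      also have "\<dots> = (matrix f ** transpose V) $ i $ j"
        by (simp add: V_def matrix_vector_mult_def matrix_matrix_mult_def transpose_def)
      finally show ?thesis .
    qed
    then show ?thesis by (simp add: vec_eq_iff)
  qed
  then show ?thesis by blast
qed

lemma row_prod_range:
  fixes X :: "real^'d^'n" and Wq Wk :: "real^'k^'d"
  shows "(c *\<^sub>R ((X ** Wq) ** transpose (X ** Wk))) $ i
         = X *v (Wk *v (c *\<^sub>R ((X ** Wq) $ i)))"
proof -
  have "(c *\<^sub>R ((X ** Wq) ** transpose (X ** Wk))) $ i $ j
         = (X *v (Wk *v (c *\<^sub>R ((X ** Wq) $ i)))) $ j" for j
  proof -
    have "(c *\<^sub>R ((X ** Wq) ** transpose (X ** Wk))) $ i $ j
        = c * (\<Sum>l\<in>UNIV. (X ** Wq) $ i $ l * (\<Sum>a\<in>UNIV. X $ j $ a * Wk $ a $ l))"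
      by (simp add: matrix_matrix_mult_def transpose_def)
    also have "\<dots> = (\<Sum>l\<in>UNIV. \<Sum>a\<in>UNIV. X $ j $ a * (Wk $ a $ l * (c * (X ** Wq) $ i $ l)))"
      by (simp add: sum_distrib_left mult_ac)
    also have "\<dots> = (\<Sum>a\<in>UNIV. \<Sum>l\<in>UNIV. X $ j $ a * (Wk $ a $ l * (c * (X ** Wq) $ i $ l)))"
      by (rule sum.swap)
    also have "\<dots> = (X *v (Wk *v (c *\<^sub>R ((X ** Wq) $ i)))) $ j"
      by (simp add: matrix_vector_mult_def sum_distrib_left)
    finally show ?thesis .
  qed
  then show ?thesis by (simp add: vec_eq_iff)
qed

lemma part2:
  fixes X :: "real^'d^'n" and c :: real
  assumes "CARD('d) < CARD('n) - 1"
  shows "\<exists>A :: real^'n^'n.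
         row_stochastic A \<and> entrywise_pos A \<and> rank (mat_log A) = 1 \<and>
         \<not> (\<exists>(Wq :: real^'k^'d) (Wk :: real^'k^'d).
              softmax (c *\<^sub>R ((X ** Wq) ** transpose (X ** Wk))) = A)"
proof -
  let ?C = "range (\<lambda>x. X *v x)"
  define S where "S = span (insert (vec 1) ?C)"
  have "dim ?C \<le> dim (UNIV :: (real^'d) set)"
    by (intro dim_image_le matrix_vector_mul_linear)
  then have dC: "dim ?C \<le> CARD('d)" by (simp add: dim_UNIV)
  have "dim S \<le> dim ?C + 1"
    unfolding S_def dim_span by (simp add: dim_insert)
  with dC assms have "dim S < dim (UNIV :: (real^'n) set)"
    by (simp add: dim_UNIV)
  then have "S \<noteq> UNIV" by auto
  then obtain w where w: "w \<notin> S" by blast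
  define Z where "Z = (\<Sum>j\<in>UNIV. exp (w $ j))"
  have Zpos: "Z > 0" unfolding Z_def by (intro sum_pos) auto
  define v where "v = w - ln Z *\<^sub>R vec 1"
  have one: "vec 1 \<in> S" unfolding S_def by (simp add: span_base)
  have vS: "v \<notin> S"
  proof
    assume "v \<in> S"
    then have "v + ln Z *\<^sub>R vec 1 \<in> S"
      using one unfolding S_def by (intro span_add span_mul) auto
    then show False using w by (simp add: v_def)
  qed
  have v0: "v \<noteq> 0" using vS unfolding S_def using span_zero by auto
  define A :: "real^'n^'n" where "A = (\<chi> i j. exp (v $ j))"
  have ev: "exp (v $ j) = exp (w $ j) / Z" for j
    using Zpos by (simp add: v_def exp_diff)
  have rs: "row_stochastic A"
    unfolding row_stochastic_def A_def
    using Zpos by (simp add: ev Z_def sum_divide_distrib[symmetric])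
  have ep: "entrywise_pos A" unfolding entrywise_pos_def A_def by simp
  have ml: "mat_log A = (\<chi> i. v)"
    unfolding mat_log_def A_def by (simp add: vec_eq_iff)
  have "rows (\<chi> i. v :: real^'n^'n) = {v}"
    by (auto simp: rows_def row_def vec_eq_iff)
  then have rk: "rank (mat_log A) = 1"
    using v0 by (simp add: ml row_rank_def dim_singleton)
  have nr: "\<not> (\<exists>(Wq :: real^'k^'d) (Wk :: real^'k^'d).
              softmax (c *\<^sub>R ((X ** Wq) ** transpose (X ** Wk))) = A)"
  proof
    assume "\<exists>(Wq :: real^'k^'d) (Wk :: real^'k^'d).
              softmax (c *\<^sub>R ((X ** Wq) ** transpose (X ** Wk))) = A"
    then obtain Wq Wk :: "real^'k^'d" where
      E: "softmax (c *\<^sub>R ((X ** Wq) ** transpose (X ** Wk))) = A" by blast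
    define M where "M = c *\<^sub>R ((X ** Wq) ** transpose (X ** Wk))"
    obtain i0 :: 'n where True by blast
    define s where "s = (\<Sum>k\<in>UNIV. exp (M $ i0 $ k))"
    have spos: "s > 0" unfolding s_def by (intro sum_pos) auto
    have "exp (M $ i0 $ j) / s = exp (v $ j)" for j
    proof -
      have "softmax M $ i0 $ j = A $ i0 $ j" using E M_def by simp
      then show ?thesis by (simp add: softmax_def A_def s_def)
    qed
    then have "ln (exp (M $ i0 $ j) / s) = v $ j" for j by simp
    then have "M $ i0 $ j - ln s = v $ j" for j
      using spos by (simp add: ln_div)
    then have veq: "v = M $ i0 - ln s *\<^sub>R vec 1"
      by (simp add: vec_eq_iff)
    have "M $ i0 \<in> S"
      unfolding M_def row_prod_range S_def by (intro span_base) auto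
    then have "v \<in> S" unfolding veq
      using one unfolding S_def by (intro span_diff span_mul) auto
    then show False using vS by simp
  qed
  have all: "row_stochastic A \<and> entrywise_pos A \<and> rank (mat_log A) = 1 \<and>
         \<not> (\<exists>(Wq :: real^'k^'d) (Wk :: real^'k^'d).
              softmax (c *\<^sub>R ((X ** Wq) ** transpose (X ** Wk))) = A)"
    using rs ep rk nr by (intro conjI)
  show ?thesis
    apply (rule exI[of _ A])
    apply (rule all)
    done
qed

theorem theorem1:
  shows
  "(\<forall>(N::nat) (X :: nat \<Rightarrow> real^'d^'n) (A :: nat \<Rightarrow> real^'n^'n).
      N > 0 \<longrightarrow> inj_on X {1..N} \<longrightarrow>
      (\<forall>m\<in>{1..N}. row_stochastic (A m) \<and> entrywise_pos (A m) \<and>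
                    rank (mat_log (A m)) \<le> CARD('k)) \<longrightarrow>
      (\<exists>(Q :: real^'d^'n \<Rightarrow> real^'k^'n) (K :: real^'d^'n \<Rightarrow> real^'k^'n).
         \<forall>m\<in>{1..N}.
           softmax ((1 / sqrt (real CARD('k))) *\<^sub>R (Q (X m) ** transpose (K (X m)))) = A m))
   \<and>
   (CARD('d) < CARD('n) - 1 \<longrightarrow>
      (\<forall>X :: real^'d^'n. \<exists>A :: real^'n^'n.
         row_stochastic A \<and> entrywise_pos A \<and> rank (mat_log A) = 1 \<and>
         \<not> (\<exists>(Wq :: real^'k^'d) (Wk :: real^'k^'d).
              softmax ((1 / sqrt (real CARD('k))) *\<^sub>R ((X ** Wq) ** transpose (X ** Wk))) = A)))"
proof (intro conjI allI impI)
  fix X :: "real^'d^'n"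
  assume "CARD('d) < CARD('n) - 1"
  then show "\<exists>A :: real^'n^'n.
         row_stochastic A \<and> entrywise_pos A \<and> rank (mat_log A) = 1 \<and>
         \<not> (\<exists>(Wq :: real^'k^'d) (Wk :: real^'k^'d).
              softmax ((1 / sqrt (real CARD('k))) *\<^sub>R ((X ** Wq) ** transpose (X ** Wk))) = A)"
    by (rule part2)
next
  fix N :: nat and X :: "nat \<Rightarrow> real^'d^'n" and A :: "nat \<Rightarrow> real^'n^'n"
  assume inj: "inj_on X {1..N}"
    and H: "\<forall>m\<in>{1..N}. row_stochastic (A m) \<and> entrywise_pos (A m) \<and>
                    rank (mat_log (A m)) \<le> CARD('k)"
  have "\<forall>m\<in>{1..N}. \<exists>UV :: (real^'k^'n) \<times> (real^'k^'n).
          mat_log (A m) = fst UV ** transpose (snd UV)"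
  proof
    fix m assume m: "m \<in> {1..N}"
    from H m have "rank (mat_log (A m)) \<le> CARD('k)" by blast
    then obtain U :: "real^'k^'n" and V :: "real^'k^'n"
      where "mat_log (A m) = U ** transpose V"
      using rank_factor by blast
    then show "\<exists>UV :: (real^'k^'n) \<times> (real^'k^'n).
          mat_log (A m) = fst UV ** transpose (snd UV)"
      by (intro exI[of _ "(U, V)"]) (simp only: fst_conv snd_conv)
  qed
  then have "\<exists>F :: nat \<Rightarrow> (real^'k^'n) \<times> (real^'k^'n). \<forall>m\<in>{1..N}.
          mat_log (A m) = fst (F m) ** transpose (snd (F m))"
    by (rule bchoice)
  then obtain F :: "nat \<Rightarrow> (real^'k^'n) \<times> (real^'k^'n)" where F0: "\<forall>m\<in>{1..N}.
          mat_log (A m) = fst (F m) ** transpose (snd (F m))" ..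
  have F: "mat_log (A m) = fst (F m) ** transpose (snd (F m))" if "m \<in> {1..N}" for m
    using F0 that by (rule bspec)
  define r where "r = sqrt (real CARD('k))"
  have rpos: "r > 0" unfolding r_def by simp
  define Q where "Q = (\<lambda>x. r *\<^sub>R fst (F (inv_into {1..N} X x)))"
  define K where "K = (\<lambda>x. snd (F (inv_into {1..N} X x)))"
  show "\<exists>(Q :: real^'d^'n \<Rightarrow> real^'k^'n) (K :: real^'d^'n \<Rightarrow> real^'k^'n).
         \<forall>m\<in>{1..N}.
           softmax ((1 / sqrt (real CARD('k))) *\<^sub>R (Q (X m) ** transpose (K (X m)))) = A m"
  proof (intro exI ballI)
    fix m assume m: "m \<in> {1..N}"
    have iv: "inv_into {1..N} X (X m) = m" using inv_into_f_f[OF inj m] .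
    have "(1 / sqrt (real CARD('k))) *\<^sub>R (Q (X m) ** transpose (K (X m))) = mat_log (A m)"
      using rpos unfolding Q_def K_def iv F[OF m] r_def[symmetric] by (simp add: scalar_matrix_assoc[symmetric])
    then show "softmax ((1 / sqrt (real CARD('k))) *\<^sub>R (Q (X m) ** transpose (K (X m)))) = A m"
      using H m softmax_log by metis
  qed
qed

end
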